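(* Let $K$ be an imaginary quadratic field, $O$ an order in $K$, $\mathfrak{m}\subseteq O$ a proper ideal, $\Lambda\subseteq\mathbb{Z}$ multiplicatively closed, $H=P_{O,\Lambda}(\mathfrak{m})$, and $\pi:\mathrm{cl}_H\to\mathrm{cl}_O$ the natural surjection. Let $\Gamma$ be a subgroup of $\mathrm{GL}(O/\mathfrak{m})$ with $\Gamma\supseteq\Gamma_{O,\Lambda}(\mathfrak{m})$. Then $\ker\pi$ acts on the set $$X_\Gamma:=\{M\Gamma: M\in\mathrm{GL}(O/\mathfrak{m})\}/\sim,$$ where $\sim$ identifies left cosets up to left multiplication by $\mu_u$ for $u\in O^\times$; namely, identifying $\ker\pi$ with classes of $[\alpha]\in(O/\mathfrak{m})^\times$ modulo multiplication by the images of $\Lambda$ and $O^\times$ (via $[\alpha]\mapsto[\alpha O]$), the rule $M\Gamma\mapsto\mu_\alpha M\Gamma$ is a well-defined action.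
   Context: $\mathrm{GL}(O/\mathfrak{m})$ is the group of group automorphisms of $O/\mathfrak{m}$, and $\mu_\alpha$ denotes multiplication by $\alpha$ on $O/\mathfrak{m}$. Proper ideal: $\{\alpha\in K:\alpha\mathfrak{m}\subseteq\mathfrak{m}\}=O$. $\mathrm{cl}_O$ is the class group of proper fractional ideals modulo principal ones. $I_O(\mathfrak{m})$ is generated by proper integral ideals coprime to $\mathfrak{m}$, $\mathrm{cl}_H=I_O(\mathfrak{m})/H$, and $\pi$ sends the class of $\mathfrak{a}$ to its class in $\mathrm{cl}_O$. For $\alpha,\beta\in K^\times$, $\alpha\equiv\beta\bmod\mathfrak{m}$ means $\alpha_1\beta_2-\alpha_2\beta_1\in\mathfrak{m}$ whenever $\alpha=\alpha_1/\alpha_2,\beta=\beta_1/\beta_2$ with $\alpha_i,\beta_i\in O$. $P_{O,\Lambda}(\mathfrak{m})=\{\alpha O:\alpha\equiv\lambda\bmod\mathfrak{m}$ for some $\lambda\in\Lambda$ coprime to $N(\mathfrak{m})\}$ and $\Gamma_{O,\Lambda}(\mathfrak{m})=\{\mu_\alpha:\alpha O\in P_{O,\Lambda}(\mathfrak{m})\}$. By an exact sequence $1\to O^\times/(O^\times\cap(\Lambda+\mathfrak{m}))\to(O/\mathfrak{m})^\times/\Delta\to\mathrm{cl}_H\to\mathrm{cl}_O\to1$ (with $\Delta$ the image of $\Lambda$ in $(O/\mathfrak{m})^\times$), $\ker\pi$ is the image of $(O/\mathfrak{m})^\times$ under $[\alpha]\mapsto[\alpha O]$. *)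

theory Defs
  imports Complex_Main "HOL-Algebra.Algebra"
begin

definition imag_quad_field :: "int \<Rightarrow> complex set" where
  "imag_quad_field d =
     {of_rat p + of_rat q * (\<i> * complex_of_real (sqrt (real_of_int d))) | p q. True}"

definition is_imag_quad_field :: "complex set \<Rightarrow> bool" where
  "is_imag_quad_field K \<longleftrightarrow> (\<exists>d::int. d > 0 \<and> K = imag_quad_field d)"

text \<open>An order of K: a subring of K with 1 which is a lattice of full rank (Z-span of two
  R-linearly independent elements).\<close>
definition is_order :: "complex set \<Rightarrow> complex set \<Rightarrow> bool" where
  "is_order K Ord \<longleftrightarrow> Ord \<subseteq> K \<and> 1 \<in> Ord \<and>
     (\<forall>x\<in>Ord. \<forall>y\<in>Ord. x + y \<in> Ord \<and> x * y \<in> Ord \<and> - x \<in> Ord) \<and>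
     (\<exists>\<omega>1 \<omega>2. Ord = {of_int a * \<omega>1 + of_int b * \<omega>2 | a b. True} \<and> Im (\<omega>1 * cnj \<omega>2) \<noteq> 0)"

definition is_ideal :: "complex set \<Rightarrow> complex set \<Rightarrow> bool" where
  "is_ideal Ord m \<longleftrightarrow> m \<subseteq> Ord \<and> 0 \<in> m \<and> (\<forall>x\<in>m. \<forall>y\<in>m. x + y \<in> m) \<and> (\<forall>x\<in>m. - x \<in> m) \<and>
     (\<forall>a\<in>Ord. \<forall>x\<in>m. a * x \<in> m)"

text \<open>Proper ideal: its multiplier ring in K is exactly Ord.\<close>
definition proper_ideal :: "complex set \<Rightarrow> complex set \<Rightarrow> complex set \<Rightarrow> bool" where
  "proper_ideal K Ord m \<longleftrightarrow> is_ideal Ord m \<and> {\<alpha>\<in>K. \<forall>x\<in>m. \<alpha> * x \<in> m} = Ord"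

definition add_grp :: "complex set \<Rightarrow> complex monoid" where
  "add_grp Ord = \<lparr>carrier = Ord, monoid.mult = (+), one = 0\<rparr>"

definition quotO :: "complex set \<Rightarrow> complex set \<Rightarrow> complex set monoid" where
  "quotO Ord m = add_grp Ord Mod m"

definition GL :: "complex set \<Rightarrow> complex set \<Rightarrow> (complex set \<Rightarrow> complex set) monoid" where
  "GL Ord m = AutoGroup (quotO Ord m)"

definition normQ :: "complex set \<Rightarrow> complex set \<Rightarrow> nat" where
  "normQ Ord m = card (carrier (quotO Ord m))"

definition units_O :: "complex set \<Rightarrow> complex set" where
  "units_O Ord = {u\<in>Ord. \<exists>v\<in>Ord. u * v = 1}"

definition units_mod :: "complex set \<Rightarrow> complex set \<Rightarrow> complex set" where
  "units_mod Ord m = {\<alpha>\<in>Ord. \<exists>\<beta>\<in>Ord. \<alpha> * \<beta> - 1 \<in> m}"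

definition mu :: "complex set \<Rightarrow> complex set \<Rightarrow> complex \<Rightarrow> complex set \<Rightarrow> complex set" where
  "mu Ord m \<alpha> = (\<lambda>C\<in>carrier (quotO Ord m). {h + \<alpha> * c | h c. h \<in> m \<and> c \<in> C})"

text \<open>An automorphism f of Ord/m is multiplication by alpha in K (alpha = a1/a2, a_i in Ord).\<close>
definition mult_by :: "complex set \<Rightarrow> complex set \<Rightarrow> complex \<Rightarrow> (complex set \<Rightarrow> complex set) \<Rightarrow> bool" where
  "mult_by Ord m \<alpha> f \<longleftrightarrow> (\<forall>a1 a2 x y. a1 \<in> Ord \<and> a2 \<in> Ord \<and> a2 \<noteq> 0 \<and> \<alpha> = a1 / a2 \<and> x \<in> Ord \<and> y \<in> Ord \<and>
      f (m #>\<^bsub>add_grp Ord\<^esub> x) = m #>\<^bsub>add_grp Ord\<^esub> y \<longrightarrow> a2 * y - a1 * x \<in> m)"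

definition cong_mod :: "complex set \<Rightarrow> complex set \<Rightarrow> complex \<Rightarrow> complex \<Rightarrow> bool" where
  "cong_mod Ord m \<alpha> \<beta> \<longleftrightarrow> (\<forall>a1 a2 b1 b2. a1 \<in> Ord \<and> a2 \<in> Ord \<and> b1 \<in> Ord \<and> b2 \<in> Ord \<and> a2 \<noteq> 0 \<and> b2 \<noteq> 0 \<and>
      \<alpha> = a1 / a2 \<and> \<beta> = b1 / b2 \<longrightarrow> a1 * b2 - a2 * b1 \<in> m)"

definition Lam_cop :: "complex set \<Rightarrow> complex set \<Rightarrow> int set \<Rightarrow> int set" where
  "Lam_cop Ord m \<Lambda> = {l\<in>\<Lambda>. coprime l (int (normQ Ord m))}"

definition P_OL :: "complex set \<Rightarrow> complex set \<Rightarrow> complex set \<Rightarrow> int set \<Rightarrow> complex set set" where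
  "P_OL K Ord m \<Lambda> = {(\<lambda>x. \<alpha> * x) ` Ord | \<alpha>. \<alpha> \<in> K \<and> \<alpha> \<noteq> 0 \<and>
      (\<exists>l\<in>Lam_cop Ord m \<Lambda>. cong_mod Ord m \<alpha> (of_int l))}"

definition Gamma_OL :: "complex set \<Rightarrow> complex set \<Rightarrow> complex set \<Rightarrow> int set \<Rightarrow> (complex set \<Rightarrow> complex set) set" where
  "Gamma_OL K Ord m \<Lambda> = {f \<in> carrier (GL Ord m). \<exists>\<alpha>. \<alpha> \<in> K \<and> \<alpha> \<noteq> 0 \<and>
      (\<lambda>x. \<alpha> * x) ` Ord \<in> P_OL K Ord m \<Lambda> \<and> mult_by Ord m \<alpha> f}"

definition coset_sim :: "complex set \<Rightarrow> complex set \<Rightarrow> (complex set \<Rightarrow> complex set) set \<Rightarrow> (complex set \<Rightarrow> complex set) set \<Rightarrow> bool" where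
  "coset_sim Ord m A B \<longleftrightarrow> (\<exists>u\<in>units_O Ord. B = mu Ord m u <#\<^bsub>GL Ord m\<^esub> A)"

text \<open>Equality in ker pi = (Ord/m)^x / (Delta * image of Ord^x), on representatives.\<close>
definition ker_equiv :: "complex set \<Rightarrow> complex set \<Rightarrow> int set \<Rightarrow> complex \<Rightarrow> complex \<Rightarrow> bool" where
  "ker_equiv Ord m \<Lambda> \<alpha> \<beta> \<longleftrightarrow> (\<exists>l\<in>Lam_cop Ord m \<Lambda>. \<exists>u\<in>units_O Ord. \<alpha> - of_int l * u * \<beta> \<in> m)"

end

theory Submission
  imports Defs
begin

locale qs =
  fixes Ord m :: "complex set"
  assumes one_O: "1 \<in> Ord"
    and cl: "\<forall>x\<in>Ord. \<forall>y\<in>Ord. x + y \<in> Ord \<and> x * y \<in> Ord \<and> - x \<in> Ord"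
    and idl: "is_ideal Ord m"
begin

abbreviation "G \<equiv> add_grp Ord"
abbreviation "Q \<equiv> quotO Ord m"

lemma add_O: "x \<in> Ord \<Longrightarrow> y \<in> Ord \<Longrightarrow> x + y \<in> Ord" using cl by blast
lemma mul_O: "x \<in> Ord \<Longrightarrow> y \<in> Ord \<Longrightarrow> x * y \<in> Ord" using cl by blast
lemma neg_O: "x \<in> Ord \<Longrightarrow> - x \<in> Ord" using cl by blast
lemma zero_O: "0 \<in> Ord" using add_O[OF one_O neg_O[OF one_O]] by simp
lemma diff_O: "x \<in> Ord \<Longrightarrow> y \<in> Ord \<Longrightarrow> x - y \<in> Ord" using add_O[OF _ neg_O, of x y] by simp

lemma m_sub: "m \<subseteq> Ord" and m0: "0 \<in> m" and m_add: "x \<in> m \<Longrightarrow> y \<in> m \<Longrightarrow> x + y \<in> m"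
  and m_neg: "x \<in> m \<Longrightarrow> - x \<in> m" and m_mul: "a \<in> Ord \<Longrightarrow> x \<in> m \<Longrightarrow> a * x \<in> m"
  using idl unfolding is_ideal_def by blast+
lemma m_mul': "a \<in> Ord \<Longrightarrow> x \<in> m \<Longrightarrow> x * a \<in> m" using m_mul by (simp add: mult.commute)
lemma m_diff: "x \<in> m \<Longrightarrow> y \<in> m \<Longrightarrow> x - y \<in> m" using m_add[OF _ m_neg, of x y] by simp

lemma of_nat_O: "of_nat n \<in> Ord"
  by (induction n) (auto simp: zero_O add_O one_O add.commute)
lemma of_int_O: "of_int k \<in> Ord"
proof (cases "k \<ge> 0")
  case True then show ?thesis using of_nat_O[of "nat k"] by simp
next
  case False then show ?thesis using neg_O[OF of_nat_O[of "nat (-k)"]] by simp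
qed

lemma G_cg: "comm_group G"
  apply (rule comm_groupI)
  by (auto simp: add_grp_def add_O zero_O) (metis neg_O add.left_inverse)

lemma G_grp: "group G" using G_cg comm_group.axioms(2) by blast

lemma inv_G: "x \<in> Ord \<Longrightarrow> inv\<^bsub>G\<^esub> x = - x"
  by (rule group.inv_equality[OF G_grp]) (auto simp: add_grp_def neg_O)

lemma m_subgroup: "subgroup m G"
  apply (rule subgroup.intro)
  using m_sub m0 m_add m_neg inv_G
  by (auto simp: add_grp_def)

lemma m_normal: "m \<lhd> G"
  using comm_group.subgroup_imp_normal[OF G_cg m_subgroup] .

lemma Q_grp: "group Q"
  unfolding quotO_def using normal.factorgroup_is_group[OF m_normal] .

lemma rc: "m #>\<^bsub>G\<^esub> x = (\<lambda>h. h + x) ` m"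
  by (auto simp: r_coset_def add_grp_def)

lemma carQ: "carrier Q = (\<lambda>x. m #>\<^bsub>G\<^esub> x) ` Ord"
  unfolding quotO_def carrier_FactGroup by (simp add: add_grp_def)

lemma rc_eq: "x \<in> Ord \<Longrightarrow> y \<in> Ord \<Longrightarrow> (m #>\<^bsub>G\<^esub> x = m #>\<^bsub>G\<^esub> y) \<longleftrightarrow> x - y \<in> m"
proof
  assume "m #>\<^bsub>G\<^esub> x = m #>\<^bsub>G\<^esub> y"
  then have "0 + x \<in> (\<lambda>h. h + y) ` m" using m0 rc by (metis image_eqI)
  then obtain h where "h \<in> m" "x = h + y" by auto
  then show "x - y \<in> m" by simp
next
  assume a: "x - y \<in> m"
  show "m #>\<^bsub>G\<^esub> x = m #>\<^bsub>G\<^esub> y" unfolding rc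
  proof safe
    fix h assume "h \<in> m"
    then have "h + (x - y) \<in> m" using a m_add by blast
    then show "h + x \<in> (\<lambda>h. h + y) ` m" by (force intro: image_eqI[of _ _ "h + (x - y)"])
  next
    fix h assume "h \<in> m"
    then have "h - (x - y) \<in> m" using a m_diff by blast
    then show "h + y \<in> (\<lambda>h. h + x) ` m" by (force intro: image_eqI[of _ _ "h - (x - y)"])
  qed
qed

lemma mu_rc: "a \<in> Ord \<Longrightarrow> x \<in> Ord \<Longrightarrow> mu Ord m a (m #>\<^bsub>G\<^esub> x) = m #>\<^bsub>G\<^esub> (a * x)"
proof -
  assume a: "a \<in> Ord" and x: "x \<in> Ord"
  have c: "m #>\<^bsub>G\<^esub> x \<in> carrier Q" using carQ x by blast
  have "{h + a * c | h c. h \<in> m \<and> c \<in> m #>\<^bsub>G\<^esub> x} = (\<lambda>h. h + a * x) ` m"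
  proof safe
    fix h c assume h: "h \<in> m" and "c \<in> m #>\<^bsub>G\<^esub> x"
    then obtain h' where h': "h' \<in> m" "c = h' + x" using rc by auto
    have "h + a * h' \<in> m" using h h' a m_add m_mul by blast
    then show "h + a * c \<in> (\<lambda>h. h + a * x) ` m" using h'
      by (force simp: algebra_simps intro: image_eqI[of _ _ "h + a * h'"])
  next
    fix h assume "h \<in> m"
    moreover have "0 + x \<in> m #>\<^bsub>G\<^esub> x" using rc m0 by blast
    ultimately show "\<exists>h' c. h + a * x = h' + a * c \<and> h' \<in> m \<and> c \<in> m #>\<^bsub>G\<^esub> x" by force
  qed
  then show ?thesis using c unfolding mu_def rc by simp
qed


lemma Qel: "C \<in> carrier Q \<Longrightarrow> (\<And>x. x \<in> Ord \<Longrightarrow> C = m #>\<^bsub>G\<^esub> x \<Longrightarrow> P) \<Longrightarrow> P"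
  using carQ by blast

lemma rcQ: "x \<in> Ord \<Longrightarrow> m #>\<^bsub>G\<^esub> x \<in> carrier Q" using carQ by blast

lemma mu_ext: "mu Ord m a \<in> extensional (carrier Q)" unfolding mu_def by simp

lemma mu_cong: assumes "a \<in> Ord" "b \<in> Ord" "a - b \<in> m" shows "mu Ord m a = mu Ord m b"
proof (rule extensionalityI[OF mu_ext mu_ext])
  fix C assume "C \<in> carrier Q"
  then obtain x where x: "x \<in> Ord" "C = m #>\<^bsub>G\<^esub> x" by (rule Qel)
  have "a * x - b * x \<in> m" using m_mul'[OF x(1) assms(3)] by (simp add: algebra_simps)
  then show "mu Ord m a C = mu Ord m b C" using x assms mu_rc rc_eq mul_O by simp
qed

lemma mu_closed: "a \<in> Ord \<Longrightarrow> C \<in> carrier Q \<Longrightarrow> mu Ord m a C \<in> carrier Q"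
  by (metis Qel mu_rc rcQ mul_O)

lemma mu_comp: assumes "a \<in> Ord" "b \<in> Ord"
  shows "compose (carrier Q) (mu Ord m a) (mu Ord m b) = mu Ord m (a * b)"
proof (rule extensionalityI[OF compose_extensional mu_ext])
  fix C assume "C \<in> carrier Q"
  then obtain x where x: "x \<in> Ord" "C = m #>\<^bsub>G\<^esub> x" by (rule Qel)
  then show "compose (carrier Q) (mu Ord m a) (mu Ord m b) C = mu Ord m (a * b) C"
    using assms by (simp add: compose_def mu_rc mul_O mult.assoc rcQ)
qed

lemma mu_one: "mu Ord m 1 = (\<lambda>x\<in>carrier Q. x)"
proof (rule extensionalityI[OF mu_ext])
  show "(\<lambda>x\<in>carrier Q. x) \<in> extensional (carrier Q)" by simp
  fix C assume "C \<in> carrier Q"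
  then obtain x where x: "x \<in> Ord" "C = m #>\<^bsub>G\<^esub> x" by (rule Qel)
  then show "mu Ord m 1 C = (\<lambda>x\<in>carrier Q. x) C" using mu_rc one_O rcQ by simp
qed

lemma multQ: "x \<in> Ord \<Longrightarrow> y \<in> Ord \<Longrightarrow> (m #>\<^bsub>G\<^esub> x) \<otimes>\<^bsub>Q\<^esub> (m #>\<^bsub>G\<^esub> y) = m #>\<^bsub>G\<^esub> (x + y)"
  unfolding quotO_def using normal.rcos_sum[OF m_normal, of x y] by (simp add: add_grp_def)

lemma mu_hom: assumes a: "a \<in> Ord" shows "mu Ord m a \<in> hom Q Q"
proof (rule homI)
  fix C assume "C \<in> carrier Q" then show "mu Ord m a C \<in> carrier Q" using mu_closed a by blast
next
  fix C D assume "C \<in> carrier Q" "D \<in> carrier Q"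
  then obtain x y where x: "x \<in> Ord" "C = m #>\<^bsub>G\<^esub> x" and y: "y \<in> Ord" "D = m #>\<^bsub>G\<^esub> y"
    by (metis Qel)
  show "mu Ord m a (C \<otimes>\<^bsub>Q\<^esub> D) = mu Ord m a C \<otimes>\<^bsub>Q\<^esub> mu Ord m a D"
    using x y a by (simp add: multQ mu_rc add_O mul_O distrib_left)
qed

lemma carGL: "carrier (GL Ord m) = auto Q"
  by (simp add: GL_def AutoGroup_def BijGroup_def)

lemma GL_grp: "group (GL Ord m)"
  unfolding GL_def using group.AutoGroup[OF Q_grp] .

lemma GL_mult: "f \<in> carrier (GL Ord m) \<Longrightarrow> g \<in> carrier (GL Ord m) \<Longrightarrow>
   f \<otimes>\<^bsub>GL Ord m\<^esub> g = compose (carrier Q) f g"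
  by (simp add: carGL auto_def) (simp add: GL_def AutoGroup_def BijGroup_def)

lemma GL_one: "\<one>\<^bsub>GL Ord m\<^esub> = (\<lambda>x\<in>carrier Q. x)"
  by (simp add: GL_def AutoGroup_def BijGroup_def)

lemma mu_GL: assumes a: "a \<in> Ord" and b: "b \<in> Ord" and ab: "a * b - 1 \<in> m"
  shows "mu Ord m a \<in> carrier (GL Ord m)"
proof -
  have e: "mu Ord m (a * b) = mu Ord m 1" "mu Ord m (b * a) = mu Ord m 1"
    using mu_cong[OF mul_O[OF a b] one_O ab] by (auto simp: mult.commute)
  have "bij_betw (mu Ord m a) (carrier Q) (carrier Q)"
  proof (rule bij_betw_byWitness[where f' = "mu Ord m b"])
    show "\<forall>C\<in>carrier Q. mu Ord m b (mu Ord m a C) = C"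
      using mu_comp[OF b a] e mu_one by (metis compose_eq restrict_apply')
    show "\<forall>C\<in>carrier Q. mu Ord m a (mu Ord m b C) = C"
      using mu_comp[OF a b] e mu_one by (metis compose_eq restrict_apply')
    show "mu Ord m a ` carrier Q \<subseteq> carrier Q" using mu_closed a by blast
    show "mu Ord m b ` carrier Q \<subseteq> carrier Q" using mu_closed b by blast
  qed
  then show ?thesis using mu_hom[OF a] mu_ext by (simp add: carGL auto_def Bij_def)
qed


lemma powG_nat: "x \<in> Ord \<Longrightarrow> x [^]\<^bsub>G\<^esub> (n::nat) = of_nat n * x"
proof (induction n)
  case 0 then show ?case by (simp add: add_grp_def)
next
  case (Suc n) then show ?case by (simp add: add_grp_def distrib_right)
qed

lemma powG_int: "x \<in> Ord \<Longrightarrow> x [^]\<^bsub>G\<^esub> (k::int) = of_int k * x"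
proof -
  assume x: "x \<in> Ord"
  show ?thesis
  proof (cases "k < 0")
    case True
    have "x [^]\<^bsub>G\<^esub> k = inv\<^bsub>G\<^esub> (x [^]\<^bsub>G\<^esub> nat (- k))" using True by (subst int_pow_def2) simp
    also have "\<dots> = - (of_nat (nat (- k)) * x)" using powG_nat[OF x] inv_G mul_O[OF of_nat_O x] by simp
    also have "\<dots> = of_int k * x" using True by simp
    finally show ?thesis .
  next
    case False
    then have "x [^]\<^bsub>G\<^esub> k = x [^]\<^bsub>G\<^esub> nat k" by (subst int_pow_def2) simp
    then show ?thesis using powG_nat[OF x] False by simp
  qed
qed

lemma powQ_int: "x \<in> Ord \<Longrightarrow> (m #>\<^bsub>G\<^esub> x) [^]\<^bsub>Q\<^esub> (k::int) = m #>\<^bsub>G\<^esub> (of_int k * x)"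
proof -
  assume x: "x \<in> Ord"
  then have "x \<in> carrier G" by (simp add: add_grp_def)
  then show ?thesis unfolding quotO_def using normal.FactGroup_int_pow[OF m_normal, of x k] powG_int[OF x]
    by simp
qed

lemma powQ_nat: "x \<in> Ord \<Longrightarrow> (m #>\<^bsub>G\<^esub> x) [^]\<^bsub>Q\<^esub> (k::nat) = m #>\<^bsub>G\<^esub> (of_nat k * x)"
proof -
  assume x: "x \<in> Ord"
  then have "x \<in> carrier G" by (simp add: add_grp_def)
  then show ?thesis unfolding quotO_def using normal.FactGroup_pow[OF m_normal, of x k] powG_nat[OF x]
    by simp
qed

lemma mu_int: "C \<in> carrier Q \<Longrightarrow> mu Ord m (of_int k) C = C [^]\<^bsub>Q\<^esub> (k::int)"
  by (metis Qel mu_rc of_int_O powQ_int)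

lemma hom_mu_comm: "M \<in> hom Q Q \<Longrightarrow> C \<in> carrier Q \<Longrightarrow> M (mu Ord m (of_int k) C) = mu Ord m (of_int k) (M C)"
proof -
  assume M: "M \<in> hom Q Q" and C: "C \<in> carrier Q"
  have "M C \<in> carrier Q" using hom_in_carrier[OF M C] .
  then show ?thesis using hom_int_pow[OF M C Q_grp Q_grp, of k] mu_int[OF C, of k] mu_int[of "M C" k] by simp
qed

lemma m_rc0: "m #>\<^bsub>G\<^esub> 0 = m" unfolding rc by simp

lemma N_in_m: "of_nat (normQ Ord m) \<in> m"
proof -
  have "(m #>\<^bsub>G\<^esub> 1) [^]\<^bsub>Q\<^esub> order Q = \<one>\<^bsub>Q\<^esub>"
    using group.pow_order_eq_1[OF Q_grp rcQ[OF one_O]] .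
  then have "m #>\<^bsub>G\<^esub> (of_nat (normQ Ord m)) = m #>\<^bsub>G\<^esub> 0"
    using powQ_nat[OF one_O] m_rc0 by (simp add: order_def normQ_def quotO_def)
  then show ?thesis using rc_eq of_nat_O zero_O by simp
qed

lemma Lam_inv: assumes "l \<in> Lam_cop Ord m \<Lambda>"
  shows "\<exists>k::int. of_int k * of_int l - 1 \<in> m"
proof -
  have "coprime l (int (normQ Ord m))" using assms by (simp add: Lam_cop_def)
  then obtain u v where uv: "u * l + v * int (normQ Ord m) = 1"
    using bezout_int[of l "int (normQ Ord m)"] by (auto simp: coprime_iff_gcd_eq_1)
  have "of_int (- v) * of_nat (normQ Ord m) \<in> m" using m_mul[OF of_int_O N_in_m] .
  moreover have "(of_int u * of_int l - 1 :: complex) = of_int (- v) * of_nat (normQ Ord m)"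
  proof -
    have "(of_int (u * l + v * int (normQ Ord m)) :: complex) = 1" using uv by simp
    then show ?thesis by (simp add: algebra_simps)
  qed
  ultimately have "of_int u * of_int l - 1 \<in> m" by simp
  then show ?thesis by blast
qed


lemma mu_mult: "a \<in> Ord \<Longrightarrow> b \<in> Ord \<Longrightarrow> mu Ord m a \<in> carrier (GL Ord m) \<Longrightarrow> mu Ord m b \<in> carrier (GL Ord m)
  \<Longrightarrow> mu Ord m a \<otimes>\<^bsub>GL Ord m\<^esub> mu Ord m b = mu Ord m (a * b)"
  by (simp add: GL_mult mu_comp)

lemma unit_GL: "u \<in> units_O Ord \<Longrightarrow> mu Ord m u \<in> carrier (GL Ord m)"
  unfolding units_O_def using mu_GL m0 by fastforce

lemma umod_GL: "u \<in> units_mod Ord m \<Longrightarrow> mu Ord m u \<in> carrier (GL Ord m)"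
  unfolding units_mod_def using mu_GL by fastforce

lemma mu_comm_GL: assumes M: "M \<in> carrier (GL Ord m)" and l: "mu Ord m (of_int l) \<in> carrier (GL Ord m)"
  shows "mu Ord m (of_int l) \<otimes>\<^bsub>GL Ord m\<^esub> M = M \<otimes>\<^bsub>GL Ord m\<^esub> mu Ord m (of_int l)"
proof -
  have h: "M \<in> hom Q Q" "M \<in> extensional (carrier Q)" using M by (auto simp: carGL auto_def Bij_def)
  show ?thesis unfolding GL_mult[OF l M] GL_mult[OF M l]
  proof (rule extensionalityI[OF compose_extensional compose_extensional])
    fix C assume C: "C \<in> carrier Q"
    then show "compose (carrier Q) (mu Ord m (of_int l)) M C = compose (carrier Q) M (mu Ord m (of_int l)) C"
      using hom_mu_comm[OF h(1) C] by (simp add: compose_def)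
  qed
qed

end

lemma main:
  fixes Ord m :: "complex set" and \<Lambda> :: "int set" and \<Gamma> :: "(complex set \<Rightarrow> complex set) set"
  assumes qsa: "qs Ord m" and sg: "subgroup \<Gamma> (GL Ord m)"
    and lg: "\<forall>l\<in>Lam_cop Ord m \<Lambda>. mu Ord m (of_int l) \<in> \<Gamma>"
  shows "(\<forall>\<alpha>\<in>units_mod Ord m. mu Ord m \<alpha> \<in> carrier (GL Ord m))
    \<and> (\<forall>\<alpha>\<in>units_mod Ord m. \<forall>\<beta>\<in>units_mod Ord m. \<forall>M\<in>carrier (GL Ord m). \<forall>N\<in>carrier (GL Ord m).
         ker_equiv Ord m \<Lambda> \<alpha> \<beta> \<and> coset_sim Ord m (M <#\<^bsub>GL Ord m\<^esub> \<Gamma>) (N <#\<^bsub>GL Ord m\<^esub> \<Gamma>) \<longrightarrow>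
         coset_sim Ord m ((mu Ord m \<alpha> \<otimes>\<^bsub>GL Ord m\<^esub> M) <#\<^bsub>GL Ord m\<^esub> \<Gamma>)
                       ((mu Ord m \<beta> \<otimes>\<^bsub>GL Ord m\<^esub> N) <#\<^bsub>GL Ord m\<^esub> \<Gamma>))
    \<and> (\<forall>M\<in>carrier (GL Ord m).
         coset_sim Ord m ((mu Ord m 1 \<otimes>\<^bsub>GL Ord m\<^esub> M) <#\<^bsub>GL Ord m\<^esub> \<Gamma>) (M <#\<^bsub>GL Ord m\<^esub> \<Gamma>))
    \<and> (\<forall>\<alpha>\<in>units_mod Ord m. \<forall>\<beta>\<in>units_mod Ord m. \<forall>M\<in>carrier (GL Ord m).
         coset_sim Ord m ((mu Ord m \<alpha> \<otimes>\<^bsub>GL Ord m\<^esub> (mu Ord m \<beta> \<otimes>\<^bsub>GL Ord m\<^esub> M)) <#\<^bsub>GL Ord m\<^esub> \<Gamma>)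
                       ((mu Ord m (\<alpha> * \<beta>) \<otimes>\<^bsub>GL Ord m\<^esub> M) <#\<^bsub>GL Ord m\<^esub> \<Gamma>))"
proof -
  interpret qs Ord m by (rule qsa)
  interpret H: group "GL Ord m" by (rule GL_grp)
  have Gs: "\<Gamma> \<subseteq> carrier (GL Ord m)" using subgroup.subset[OF sg] .
  have one_u: "1 \<in> units_O Ord" using one_O by (auto simp: units_O_def)
  have mu1: "mu Ord m 1 = \<one>\<^bsub>GL Ord m\<^esub>" by (simp add: mu_one GL_one)
  have um_O: "\<And>a. a \<in> units_mod Ord m \<Longrightarrow> a \<in> Ord" by (simp add: units_mod_def)
  have crefl: "\<And>Y. Y \<in> carrier (GL Ord m) \<Longrightarrow> coset_sim Ord m (Y <#\<^bsub>GL Ord m\<^esub> \<Gamma>) (Y <#\<^bsub>GL Ord m\<^esub> \<Gamma>)"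
  proof -
    fix Y assume Y: "Y \<in> carrier (GL Ord m)"
    have "Y <#\<^bsub>GL Ord m\<^esub> \<Gamma> = mu Ord m 1 <#\<^bsub>GL Ord m\<^esub> (Y <#\<^bsub>GL Ord m\<^esub> \<Gamma>)"
      using mu1 H.lcos_mult_one[OF H.l_coset_subset_G[OF Gs Y]] by simp
    then show "coset_sim Ord m (Y <#\<^bsub>GL Ord m\<^esub> \<Gamma>) (Y <#\<^bsub>GL Ord m\<^esub> \<Gamma>)"
      unfolding coset_sim_def using one_u by blast
  qed
  have C1: "\<forall>\<alpha>\<in>units_mod Ord m. mu Ord m \<alpha> \<in> carrier (GL Ord m)" using umod_GL by blast
  have C3: "\<forall>M\<in>carrier (GL Ord m).
         coset_sim Ord m ((mu Ord m 1 \<otimes>\<^bsub>GL Ord m\<^esub> M) <#\<^bsub>GL Ord m\<^esub> \<Gamma>) (M <#\<^bsub>GL Ord m\<^esub> \<Gamma>)"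
    using crefl mu1 by simp
  have C4: "\<forall>\<alpha>\<in>units_mod Ord m. \<forall>\<beta>\<in>units_mod Ord m. \<forall>M\<in>carrier (GL Ord m).
         coset_sim Ord m ((mu Ord m \<alpha> \<otimes>\<^bsub>GL Ord m\<^esub> (mu Ord m \<beta> \<otimes>\<^bsub>GL Ord m\<^esub> M)) <#\<^bsub>GL Ord m\<^esub> \<Gamma>)
                       ((mu Ord m (\<alpha> * \<beta>) \<otimes>\<^bsub>GL Ord m\<^esub> M) <#\<^bsub>GL Ord m\<^esub> \<Gamma>)"
  proof (intro ballI)
    fix a b M assume a: "a \<in> units_mod Ord m" and b: "b \<in> units_mod Ord m" and M: "M \<in> carrier (GL Ord m)"
    have eqab: "mu Ord m a \<otimes>\<^bsub>GL Ord m\<^esub> (mu Ord m b \<otimes>\<^bsub>GL Ord m\<^esub> M) = mu Ord m (a * b) \<otimes>\<^bsub>GL Ord m\<^esub> M"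
      using H.m_assoc[symmetric, OF umod_GL[OF a] umod_GL[OF b] M] mu_mult um_O a b umod_GL by simp
    then show "coset_sim Ord m ((mu Ord m a \<otimes>\<^bsub>GL Ord m\<^esub> (mu Ord m b \<otimes>\<^bsub>GL Ord m\<^esub> M)) <#\<^bsub>GL Ord m\<^esub> \<Gamma>)
                       ((mu Ord m (a * b) \<otimes>\<^bsub>GL Ord m\<^esub> M) <#\<^bsub>GL Ord m\<^esub> \<Gamma>)"
      using crefl[of "mu Ord m (a * b) \<otimes>\<^bsub>GL Ord m\<^esub> M"] eqab H.m_closed M umod_GL[OF a] umod_GL[OF b] by metis
  qed
  have C2: "\<forall>\<alpha>\<in>units_mod Ord m. \<forall>\<beta>\<in>units_mod Ord m. \<forall>M\<in>carrier (GL Ord m). \<forall>N\<in>carrier (GL Ord m).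
         ker_equiv Ord m \<Lambda> \<alpha> \<beta> \<and> coset_sim Ord m (M <#\<^bsub>GL Ord m\<^esub> \<Gamma>) (N <#\<^bsub>GL Ord m\<^esub> \<Gamma>) \<longrightarrow>
         coset_sim Ord m ((mu Ord m \<alpha> \<otimes>\<^bsub>GL Ord m\<^esub> M) <#\<^bsub>GL Ord m\<^esub> \<Gamma>)
                       ((mu Ord m \<beta> \<otimes>\<^bsub>GL Ord m\<^esub> N) <#\<^bsub>GL Ord m\<^esub> \<Gamma>)"
  proof (intro ballI impI)
    fix a b M N assume a: "a \<in> units_mod Ord m" and b: "b \<in> units_mod Ord m"
      and M: "M \<in> carrier (GL Ord m)" and N: "N \<in> carrier (GL Ord m)"
      and h: "ker_equiv Ord m \<Lambda> a b \<and> coset_sim Ord m (M <#\<^bsub>GL Ord m\<^esub> \<Gamma>) (N <#\<^bsub>GL Ord m\<^esub> \<Gamma>)"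
    obtain l u where l: "l \<in> Lam_cop Ord m \<Lambda>" and u: "u \<in> units_O Ord" and alu: "a - of_int l * u * b \<in> m"
      using h unfolding ker_equiv_def by blast
    obtain v where v: "v \<in> units_O Ord" and NM: "N <#\<^bsub>GL Ord m\<^esub> \<Gamma> = mu Ord m v <#\<^bsub>GL Ord m\<^esub> (M <#\<^bsub>GL Ord m\<^esub> \<Gamma>)"
      using h unfolding coset_sim_def by blast
    obtain u' where uO: "u \<in> Ord" and u': "u' \<in> Ord" "u * u' = 1" using u by (auto simp: units_O_def)
    obtain v' where vO: "v \<in> Ord" and v': "v' \<in> Ord" "v * v' = 1" using v by (auto simp: units_O_def)
    define w where "w = v * u'"
    have wO: "w \<in> Ord" using vO u' by (simp add: w_def mul_O)
    have w: "w \<in> units_O Ord" unfolding units_O_def using wO u' v' uO mul_O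
      by (auto simp: w_def intro!: bexI[of _ "v' * u"]) (metis mult.commute mult.left_commute mult_1_right)
    have aO: "a \<in> Ord" and bO: "b \<in> Ord" using a b um_O by auto
    have lO: "of_int l \<in> Ord" by (rule of_int_O)
    have lG: "mu Ord m (of_int l) \<in> \<Gamma>" using lg l by blast
    have lC: "mu Ord m (of_int l) \<in> carrier (GL Ord m)" using lG Gs by blast
    have luB: "of_int l * u * b \<in> Ord" using lO uO bO mul_O by blast
    have ea: "mu Ord m a = mu Ord m (of_int l * u * b)" using mu_cong[OF aO luB alu] .
    have vC: "mu Ord m v \<in> carrier (GL Ord m)" using unit_GL[OF v] .
    have wC: "mu Ord m w \<in> carrier (GL Ord m)" using unit_GL[OF w] .
    have aC: "mu Ord m a \<in> carrier (GL Ord m)" using umod_GL[OF a] .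
    have bC: "mu Ord m b \<in> carrier (GL Ord m)" using umod_GL[OF b] .
    have bvC: "mu Ord m (b * v) \<in> carrier (GL Ord m)" using mu_mult[OF bO vO bC vC] bC vC by (metis H.m_closed)
    have wl: "w * (of_int l * u * b) = (b * v) * of_int l" using u'(2) by (simp add: w_def algebra_simps)
    have e1: "mu Ord m w \<otimes>\<^bsub>GL Ord m\<^esub> mu Ord m a = (mu Ord m b \<otimes>\<^bsub>GL Ord m\<^esub> mu Ord m v) \<otimes>\<^bsub>GL Ord m\<^esub> mu Ord m (of_int l)"
    proof -
      have luC: "mu Ord m (of_int l * u * b) \<in> carrier (GL Ord m)" using aC ea by simp
      have "mu Ord m w \<otimes>\<^bsub>GL Ord m\<^esub> mu Ord m a = mu Ord m w \<otimes>\<^bsub>GL Ord m\<^esub> mu Ord m (of_int l * u * b)"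
        by (simp only: ea)
      also have "\<dots> = mu Ord m (w * (of_int l * u * b))" by (rule mu_mult[OF wO luB wC luC])
      also have "\<dots> = mu Ord m ((b * v) * of_int l)" by (simp only: wl)
      also have "\<dots> = mu Ord m (b * v) \<otimes>\<^bsub>GL Ord m\<^esub> mu Ord m (of_int l)"
        by (rule mu_mult[OF mul_O[OF bO vO] lO bvC lC, symmetric])
      also have "\<dots> = (mu Ord m b \<otimes>\<^bsub>GL Ord m\<^esub> mu Ord m v) \<otimes>\<^bsub>GL Ord m\<^esub> mu Ord m (of_int l)"
        by (simp only: mu_mult[OF bO vO bC vC])
      finally show ?thesis .
    qed
    have "(mu Ord m b \<otimes>\<^bsub>GL Ord m\<^esub> N) <#\<^bsub>GL Ord m\<^esub> \<Gamma> = mu Ord m b <#\<^bsub>GL Ord m\<^esub> (N <#\<^bsub>GL Ord m\<^esub> \<Gamma>)"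
      using H.lcos_m_assoc[OF Gs bC N] by simp
    also have "\<dots> = (mu Ord m b \<otimes>\<^bsub>GL Ord m\<^esub> mu Ord m v \<otimes>\<^bsub>GL Ord m\<^esub> M) <#\<^bsub>GL Ord m\<^esub> \<Gamma>"
      using NM H.lcos_m_assoc Gs bC vC M by (simp add: H.l_coset_subset_G H.m_assoc)
    also have "\<dots> = (mu Ord m b \<otimes>\<^bsub>GL Ord m\<^esub> mu Ord m v \<otimes>\<^bsub>GL Ord m\<^esub> M) <#\<^bsub>GL Ord m\<^esub> (mu Ord m (of_int l) <#\<^bsub>GL Ord m\<^esub> \<Gamma>)"
      using H.coset_join3[OF lC sg lG] by simp
    also have "\<dots> = (mu Ord m b \<otimes>\<^bsub>GL Ord m\<^esub> mu Ord m v \<otimes>\<^bsub>GL Ord m\<^esub> M \<otimes>\<^bsub>GL Ord m\<^esub> mu Ord m (of_int l)) <#\<^bsub>GL Ord m\<^esub> \<Gamma>"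
      using H.lcos_m_assoc Gs bC vC M lC by simp
    also have "\<dots> = (mu Ord m b \<otimes>\<^bsub>GL Ord m\<^esub> mu Ord m v \<otimes>\<^bsub>GL Ord m\<^esub> mu Ord m (of_int l) \<otimes>\<^bsub>GL Ord m\<^esub> M) <#\<^bsub>GL Ord m\<^esub> \<Gamma>"
      using mu_comm_GL[OF M lC] bC vC M lC by (simp add: H.m_assoc)
    also have "\<dots> = (mu Ord m w \<otimes>\<^bsub>GL Ord m\<^esub> mu Ord m a \<otimes>\<^bsub>GL Ord m\<^esub> M) <#\<^bsub>GL Ord m\<^esub> \<Gamma>"
      using e1 by simp
    also have "\<dots> = mu Ord m w <#\<^bsub>GL Ord m\<^esub> ((mu Ord m a \<otimes>\<^bsub>GL Ord m\<^esub> M) <#\<^bsub>GL Ord m\<^esub> \<Gamma>)"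
      using H.lcos_m_assoc Gs wC aC M by (simp add: H.m_assoc)
    finally show "coset_sim Ord m ((mu Ord m a \<otimes>\<^bsub>GL Ord m\<^esub> M) <#\<^bsub>GL Ord m\<^esub> \<Gamma>)
                       ((mu Ord m b \<otimes>\<^bsub>GL Ord m\<^esub> N) <#\<^bsub>GL Ord m\<^esub> \<Gamma>)"
      unfolding coset_sim_def using w by blast
  qed
  show ?thesis using C1 C2 C3 C4 by blast
qed


lemma lam_Gamma:
  fixes Ord m K :: "complex set" and \<Lambda> :: "int set" and \<Gamma> :: "(complex set \<Rightarrow> complex set) set"
  assumes qsa: "qs Ord m" and K: "is_imag_quad_field K" and sg: "subgroup \<Gamma> (GL Ord m)"
    and GG: "Gamma_OL K Ord m \<Lambda> \<subseteq> \<Gamma>" and l: "l \<in> Lam_cop Ord m \<Lambda>"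
  shows "mu Ord m (of_int l) \<in> \<Gamma>"
proof -
  interpret qs Ord m by (rule qsa)
  obtain k :: int where k: "of_int k * of_int l - 1 \<in> m" using Lam_inv[OF l] by blast
  have lC: "mu Ord m (of_int l) \<in> carrier (GL Ord m)"
    using mu_GL[OF of_int_O of_int_O, of l k] k by (simp add: mult.commute)
  show ?thesis
  proof (cases "l = 0")
    case True
    then have "(0::complex) - 1 \<in> m" using k by simp
    then have "mu Ord m 0 = mu Ord m 1" using mu_cong[OF zero_O one_O] by blast
    then show ?thesis using True mu_one GL_one subgroup.one_closed[OF sg] by simp
  next
    case False
    have lK: "(of_int l :: complex) \<in> K"
    proof -
      obtain d where "K = imag_quad_field d" using K unfolding is_imag_quad_field_def by blast
      moreover have "(of_int l :: complex) = of_rat (of_int l) + of_rat 0 * (\<i> * complex_of_real (sqrt (real_of_int d)))"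
        by simp
      ultimately show ?thesis unfolding imag_quad_field_def by blast
    qed
    have l0: "(of_int l :: complex) \<noteq> 0" using False by simp
    have cg: "cong_mod Ord m (of_int l) (of_int l)"
      unfolding cong_mod_def
    proof (intro allI impI)
      fix a1 a2 b1 b2 :: complex
      assume h: "a1 \<in> Ord \<and> a2 \<in> Ord \<and> b1 \<in> Ord \<and> b2 \<in> Ord \<and> a2 \<noteq> 0 \<and> b2 \<noteq> 0 \<and>
        of_int l = a1 / a2 \<and> of_int l = b1 / b2"
      then have "a1 = of_int l * a2" "b1 = of_int l * b2"
        by (metis nonzero_eq_divide_eq)+
      then have "a1 * b2 - a2 * b1 = 0" by simp
      then show "a1 * b2 - a2 * b1 \<in> m" using m0 by simp
    qed
    have P: "(\<lambda>x. of_int l * x) ` Ord \<in> P_OL K Ord m \<Lambda>"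
      unfolding P_OL_def using lK l0 l cg by blast
    have mb: "mult_by Ord m (of_int l) (mu Ord m (of_int l))"
      unfolding mult_by_def
    proof (intro allI impI)
      fix a1 a2 x y :: complex
      assume h: "a1 \<in> Ord \<and> a2 \<in> Ord \<and> a2 \<noteq> 0 \<and> of_int l = a1 / a2 \<and> x \<in> Ord \<and> y \<in> Ord \<and>
        mu Ord m (of_int l) (m #>\<^bsub>add_grp Ord\<^esub> x) = m #>\<^bsub>add_grp Ord\<^esub> y"
      then have a1: "a1 = of_int l * a2" by (metis nonzero_eq_divide_eq)
      from h have xO: "x \<in> Ord" and yO: "y \<in> Ord" and a2O: "a2 \<in> Ord"
        and hm: "mu Ord m (of_int l) (m #>\<^bsub>add_grp Ord\<^esub> x) = m #>\<^bsub>add_grp Ord\<^esub> y" by auto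
      have "m #>\<^bsub>add_grp Ord\<^esub> (of_int l * x) = m #>\<^bsub>add_grp Ord\<^esub> y"
        using hm mu_rc[OF of_int_O xO, of l] by simp
      then have "of_int l * x - y \<in> m" using rc_eq[OF mul_O[OF of_int_O xO] yO] by simp
      then have "(- a2) * (of_int l * x - y) \<in> m" using m_mul neg_O a2O by blast
      moreover have "(- a2) * (of_int l * x - y) = a2 * y - a1 * x" using a1 by (simp add: algebra_simps)
      ultimately show "a2 * y - a1 * x \<in> m" by simp
    qed
    have "mu Ord m (of_int l) \<in> Gamma_OL K Ord m \<Lambda>"
      unfolding Gamma_OL_def using lC lK l0 P mb by blast
    then show ?thesis using GG by blast
  qed
qed

theorem corollary3p1:
  fixes K Ord m :: "complex set" and \<Lambda> :: "int set"
    and \<Gamma> :: "(complex set \<Rightarrow> complex set) set"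
  assumes "is_imag_quad_field K"
    and "is_order K Ord"
    and "proper_ideal K Ord m"
    and "1 \<in> \<Lambda>" and "\<forall>a\<in>\<Lambda>. \<forall>b\<in>\<Lambda>. a * b \<in> \<Lambda>"
    and "subgroup \<Gamma> (GL Ord m)"
    and "Gamma_OL K Ord m \<Lambda> \<subseteq> \<Gamma>"
  shows "(\<forall>\<alpha>\<in>units_mod Ord m. mu Ord m \<alpha> \<in> carrier (GL Ord m))
    \<and> (\<forall>\<alpha>\<in>units_mod Ord m. \<forall>\<beta>\<in>units_mod Ord m. \<forall>M\<in>carrier (GL Ord m). \<forall>N\<in>carrier (GL Ord m).
         ker_equiv Ord m \<Lambda> \<alpha> \<beta> \<and> coset_sim Ord m (M <#\<^bsub>GL Ord m\<^esub> \<Gamma>) (N <#\<^bsub>GL Ord m\<^esub> \<Gamma>) \<longrightarrow>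
         coset_sim Ord m ((mu Ord m \<alpha> \<otimes>\<^bsub>GL Ord m\<^esub> M) <#\<^bsub>GL Ord m\<^esub> \<Gamma>)
                       ((mu Ord m \<beta> \<otimes>\<^bsub>GL Ord m\<^esub> N) <#\<^bsub>GL Ord m\<^esub> \<Gamma>))
    \<and> (\<forall>M\<in>carrier (GL Ord m).
         coset_sim Ord m ((mu Ord m 1 \<otimes>\<^bsub>GL Ord m\<^esub> M) <#\<^bsub>GL Ord m\<^esub> \<Gamma>) (M <#\<^bsub>GL Ord m\<^esub> \<Gamma>))
    \<and> (\<forall>\<alpha>\<in>units_mod Ord m. \<forall>\<beta>\<in>units_mod Ord m. \<forall>M\<in>carrier (GL Ord m).
         coset_sim Ord m ((mu Ord m \<alpha> \<otimes>\<^bsub>GL Ord m\<^esub> (mu Ord m \<beta> \<otimes>\<^bsub>GL Ord m\<^esub> M)) <#\<^bsub>GL Ord m\<^esub> \<Gamma>)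
                       ((mu Ord m (\<alpha> * \<beta>) \<otimes>\<^bsub>GL Ord m\<^esub> M) <#\<^bsub>GL Ord m\<^esub> \<Gamma>))"
proof -
  have qsa: "qs Ord m"
  proof
    show "1 \<in> Ord" using assms(2) unfolding is_order_def by blast
    show "\<forall>x\<in>Ord. \<forall>y\<in>Ord. x + y \<in> Ord \<and> x * y \<in> Ord \<and> - x \<in> Ord"
      using assms(2) unfolding is_order_def by blast
    show "is_ideal Ord m" using assms(3) unfolding proper_ideal_def by blast
  qed
  have lg: "\<forall>l\<in>Lam_cop Ord m \<Lambda>. mu Ord m (of_int l) \<in> \<Gamma>"
    using lam_Gamma[OF qsa assms(1) assms(6) assms(7)] by blast
  show ?thesis using main[OF qsa assms(6) lg] .
qed

end
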